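(* Let $a_0,\dots,a_N\in\mathbb{Q}$ and $r,d\in\mathbb{N}$ with $r\le N$, let $m=(r+1)(d+1)$, and let $M=(A\odot B_d\,|\,A\odot B_{d-1}\,|\,\cdots\,|\,A\odot B_0)\in\mathbb{Q}^{(N-r+1)\times m}$, with $A$, $B_j$, $\odot$ as in the context. Consider the following procedure (Algorithm 2). (1) Choose a prime $p$ and set $q=p$. (2) Compute a row-reduced basis $V$ of $\ker M \bmod p$ (i.e. of the kernel of the reduction of $M$ modulo $p$ over $\mathbb{F}_p$, the matrix with rows the elements of $V$ being in reduced row echelon form; entries are represented by integers in $\{0,\dots,p-1\}$). (3) If $V=\emptyset$, return "no recurrence found". (4) Repeat: choose a new prime $p$ (different from all primes used before) and compute a row-reduced basis $W$ of $\ker M \bmod p$; combine $V$ and $W$ entrywise by Chinese remaindering into a set $V$ of vectors in $\mathbb{Z}^m$ such that the lattice generated by $V\cup\{pq e_1,\dots,pq e_m\}$ equals $\{w\in\mathbb{Z}^m : Mw\equiv 0 \bmod pq\}$, and set $q:=pq$; apply the LLL algorithm to $V\cup\{qe_1,\dots,qe_m\}$ (where $e_i$ is the $i$th unit vector of $\mathbb{Z}^m$) and let $w$ be the first vector of the output; stop repeating as soon as $Mw=0$ and $w\neq 0$ (i.e. the recurrence $\sum_{i,j}c_{i,j}b_j(n)a_{n+i}=0$ with coefficient vector $w$ is valid on the given data). (5) Return the recurrence corresponding to $w$. Assume that every prime used does not divide any denominator of an entry of $M$ and that the rank of $M$ modulo each such prime equals the rank of $M$ over $\mathbb{Q}$.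 Then the procedure terminates, and if it returns a recurrence, the returned coefficient vector $w\in\mathbb{Z}^m$ is a nonzero element of $\ker_{\mathbb{Z}}M$, i.e. the corresponding recurrence of order $r$ and degree $d$ holds for $n=0,\dots,N-r$.
   Context: Fix a $\mathbb{Q}$-basis $b_0,b_1,\dots$ of $\mathbb{Q}[x]$ such that for every $j$, $b_0,\dots,b_j$ span the polynomials of degree at most $j$. For given $a_0,\dots,a_N\in\mathbb{Q}$ and $r\le N$, $A\in\mathbb{Q}^{(N-r+1)\times(r+1)}$ is the matrix with entry $a_{i+s}$ in row $i$ and column $s$ ($0\le i\le N-r$, $0\le s\le r$), and $B_j\in\mathbb{Q}^{(N-r+1)\times(r+1)}$ is the matrix whose row $i$ has all entries equal to $b_j(i)$. $M_1\odot M_2$ denotes the entrywise product. A vector $c\in\mathbb{Q}^{(r+1)(d+1)}$, split into blocks of length $r+1$ for $j=d,d-1,\dots,0$ with entries $c_{0,j},\dots,c_{r,j}$, corresponds to the recurrence $\sum_{i=0}^r\sum_{j=0}^d c_{i,j}b_j(n)a_{n+i}=0$; it holds on the data iff $Mc=0$. For a rational matrix $M$ with $m$ columns, $\ker_{\mathbb{Z}}M=\{x\in\mathbb{Z}^m: Mx=0\}$. LLL is the Lenstra–Lenstra–Lovász lattice reduction algorithm; it returns a basis of the input lattice whose first vector has Euclidean length at most $2^{m}$ times the length of a shortest nonzero vector of the lattice. *)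

theory Defs
  imports "HOL-Computational_Algebra.Polynomial" "HOL-Computational_Algebra.Primes"
begin

text \<open>The matrix M = (A .* B_d | ... | A .* B_0): column t lies in block t div (r+1),
which corresponds to j = d - t div (r+1), and has s = t mod (r+1).\<close>
definition recM :: "(nat \<Rightarrow> rat) \<Rightarrow> (nat \<Rightarrow> rat poly) \<Rightarrow> nat \<Rightarrow> nat \<Rightarrow> nat \<Rightarrow> nat \<Rightarrow> rat" where
  "recM a b r d i t = a (i + t mod (r+1)) * poly (b (d - t div (r+1))) (of_nat i)"

definition mat_vec :: "(nat \<Rightarrow> nat \<Rightarrow> rat) \<Rightarrow> nat \<Rightarrow> int list \<Rightarrow> nat \<Rightarrow> rat" where
  "mat_vec M m w i = (\<Sum>t<m. M i t * of_int (w ! t))"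

definition in_ker :: "(nat \<Rightarrow> nat \<Rightarrow> rat) \<Rightarrow> nat \<Rightarrow> nat \<Rightarrow> int list \<Rightarrow> bool" where
  "in_ker M n m w \<longleftrightarrow> length w = m \<and> (\<forall>i<n. mat_vec M m w i = 0)"

definition rat_cong0 :: "int \<Rightarrow> rat \<Rightarrow> bool" where
  "rat_cong0 q x \<longleftrightarrow> (\<exists>u v. v > 0 \<and> coprime v q \<and> q dvd u \<and> x = of_int u / of_int v)"

definition cong_ker :: "(nat \<Rightarrow> nat \<Rightarrow> rat) \<Rightarrow> nat \<Rightarrow> nat \<Rightarrow> int \<Rightarrow> int list \<Rightarrow> bool" where
  "cong_ker M n m q w \<longleftrightarrow> length w = m \<and> (\<forall>i<n. rat_cong0 q (mat_vec M m w i))"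

text \<open>ker M mod p is not the zero space (equivalently its row-reduced basis V is nonempty)\<close>
definition kernel_mod_nontrivial :: "(nat \<Rightarrow> nat \<Rightarrow> rat) \<Rightarrow> nat \<Rightarrow> nat \<Rightarrow> int \<Rightarrow> bool" where
  "kernel_mod_nontrivial M n m p \<longleftrightarrow> (\<exists>w. cong_ker M n m p w \<and> \<not> (\<forall>t<m. p dvd w ! t))"

definition rows_indep_Q :: "(nat \<Rightarrow> nat \<Rightarrow> rat) \<Rightarrow> nat \<Rightarrow> nat set \<Rightarrow> bool" where
  "rows_indep_Q M m I \<longleftrightarrow>
     (\<forall>c :: nat \<Rightarrow> rat. (\<forall>t<m. (\<Sum>i\<in>I. c i * M i t) = 0) \<longrightarrow> (\<forall>i\<in>I. c i = 0))"

definition rank_Q :: "(nat \<Rightarrow> nat \<Rightarrow> rat) \<Rightarrow> nat \<Rightarrow> nat \<Rightarrow> nat" where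
  "rank_Q M n m = Max {card I | I. I \<subseteq> {..<n} \<and> rows_indep_Q M m I}"

definition rows_indep_mod :: "int \<Rightarrow> (nat \<Rightarrow> nat \<Rightarrow> rat) \<Rightarrow> nat \<Rightarrow> nat set \<Rightarrow> bool" where
  "rows_indep_mod p M m I \<longleftrightarrow>
     (\<forall>c :: nat \<Rightarrow> int. (\<forall>t<m. rat_cong0 p (\<Sum>i\<in>I. of_int (c i) * M i t)) \<longrightarrow> (\<forall>i\<in>I. p dvd c i))"

definition rank_mod :: "int \<Rightarrow> (nat \<Rightarrow> nat \<Rightarrow> rat) \<Rightarrow> nat \<Rightarrow> nat \<Rightarrow> nat" where
  "rank_mod p M n m = Max {card I | I. I \<subseteq> {..<n} \<and> rows_indep_mod p M m I}"

definition lattice_of :: "nat \<Rightarrow> int list list \<Rightarrow> int list set" where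
  "lattice_of m S = {v. length v = m \<and>
     (\<exists>c :: nat \<Rightarrow> int. \<forall>t<m. v ! t = (\<Sum>i<length S. c i * (S ! i) ! t))}"

definition int_lin_indep :: "nat \<Rightarrow> int list list \<Rightarrow> bool" where
  "int_lin_indep m S \<longleftrightarrow>
     (\<forall>c :: nat \<Rightarrow> int. (\<forall>t<m. (\<Sum>i<length S. c i * (S ! i) ! t) = 0) \<longrightarrow> (\<forall>i<length S. c i = 0))"

definition sqnorm :: "int list \<Rightarrow> int" where
  "sqnorm v = (\<Sum>x\<leftarrow>v. x ^ 2)"

definition unitvec :: "nat \<Rightarrow> int \<Rightarrow> nat \<Rightarrow> int list" where
  "unitvec m q i = map (\<lambda>t. if t = i then q else 0) [0..<m]"

text \<open>Specification of LLL in dimension m: returns a basis of the input lattice whose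
  first vector has length at most 2^m times that of a shortest nonzero lattice vector
  (stated with squared norms: sqnorm \<le> 4^m * sqnorm).\<close>
definition lll_spec :: "nat \<Rightarrow> (int list list \<Rightarrow> int list list) \<Rightarrow> bool" where
  "lll_spec m lll \<longleftrightarrow> (\<forall>S. (\<forall>s\<in>set S. length s = m) \<longrightarrow>
      (\<forall>s\<in>set (lll S). length s = m) \<and>
      lattice_of m (lll S) = lattice_of m S \<and>
      int_lin_indep m (lll S) \<and>
      (lll S \<noteq> [] \<longrightarrow>
         (\<forall>v\<in>lattice_of m S. v \<noteq> replicate m 0 \<longrightarrow> sqnorm (hd (lll S)) \<le> 4 ^ m * sqnorm v)))"

end

theory Submission imports Defs begin

lemma dep:
  fixes p :: "'a::comm_ring_1"
  assumes p1: "\<not> p dvd 1" and pm: "\<And>a b. \<not> p dvd a \<Longrightarrow> \<not> p dvd b \<Longrightarrow> \<not> p dvd (a*b)"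
  shows "finite T \<Longrightarrow> finite S \<Longrightarrow> card T < card S \<Longrightarrow>
    \<exists>c. (\<exists>i\<in>S. \<not> p dvd c i) \<and> (\<forall>t\<in>T. p dvd (\<Sum>i\<in>S. c i * v i t))"
proof (induction T arbitrary: S v rule: finite_induct)
  case empty
  then obtain i0 where "i0 \<in> S" by fastforce
  then show ?case using p1 by (intro exI[of _ "\<lambda>i. if i = i0 then 1 else 0"]) auto
next
  case (insert x T)
  show ?case
  proof (cases "\<forall>i\<in>S. p dvd v i x")
    case True
    from insert have "card T < card S" by auto
    from insert.IH[OF insert.prems(1) this, of v] obtain c where
      c: "\<exists>i\<in>S. \<not> p dvd c i" "\<forall>t\<in>T. p dvd (\<Sum>i\<in>S. c i * v i t)" by blast
    have "p dvd (\<Sum>i\<in>S. c i * v i x)" using True by (intro dvd_sum) auto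
    then show ?thesis using c by auto
  next
    case False
    then obtain j where j: "j \<in> S" "\<not> p dvd v j x" by blast
    define a where "a = v j x"
    define u where "u = (\<lambda>i t. a * v i t - v i x * v j t)"
    have "card T < card (S - {j})" using insert j by auto
    from insert.IH[OF _ this, of u] insert.prems obtain c' where
      c': "\<exists>i\<in>S-{j}. \<not> p dvd c' i" "\<forall>t\<in>T. p dvd (\<Sum>i\<in>S-{j}. c' i * u i t)" by auto
    define c where "c = (\<lambda>i. if i = j then -(\<Sum>l\<in>S-{j}. c' l * v l x) else a * c' i)"
    have eq: "(\<Sum>i\<in>S. c i * v i t) = (\<Sum>i\<in>S-{j}. c' i * u i t)" for t
    proof -
      have "(\<Sum>i\<in>S. c i * v i t) = c j * v j t + (\<Sum>i\<in>S-{j}. c i * v i t)"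
        using j insert.prems by (simp add: sum.remove)
      also have "(\<Sum>i\<in>S-{j}. c i * v i t) = (\<Sum>i\<in>S-{j}. a * c' i * v i t)"
        by (intro sum.cong) (auto simp: c_def)
      also have "c j * v j t = -(\<Sum>l\<in>S-{j}. c' l * v l x * v j t)"
        by (simp add: c_def sum_distrib_right)
      finally show ?thesis
        by (simp add: u_def algebra_simps sum_subtractf sum.distrib[symmetric])
    qed
    have ux: "u i x = 0" for i by (simp add: u_def a_def algebra_simps)
    show ?thesis
    proof (intro exI[of _ c] conjI)
      from c'(1) obtain i where "i \<in> S - {j}" "\<not> p dvd c' i" by blast
      then show "\<exists>i\<in>S. \<not> p dvd c i" using pm[OF j(2)] by (auto simp: c_def a_def intro!: bexI[of _ i])
      show "\<forall>t\<in>insert x T. p dvd (\<Sum>i\<in>S. c i * v i t)"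
        using c'(2) by (auto simp: eq ux)
    qed
  qed
qed


lemma rc_dvd:
  assumes "rat_cong0 q x" "x * of_int D = of_int z"
  shows "q dvd z"
proof -
  from assms(1) obtain u v where uv: "v > 0" "coprime v q" "q dvd u" "x = of_int u / of_int v"
    unfolding rat_cong0_def by blast
  have "of_int z * of_int v = (of_int (u * D) :: rat)" using assms(2) uv by (simp add: field_simps)
  then have "z * v = u * D" by (simp flip: of_int_mult)
  then have "q dvd z * v" using uv(3) by simp
  then show ?thesis using uv(2) by (metis coprime_commute coprime_dvd_mult_left_iff)
qed

lemma rc_of_int: "q dvd z \<Longrightarrow> rat_cong0 q (of_int z)"
  unfolding rat_cong0_def by (intro exI[of _ z] exI[of _ 1]) auto

lemma rc_0: "rat_cong0 q 0"
  using rc_of_int[of q 0] by simp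

lemma den_mult: "r * of_int (snd (quotient_of r)) = of_int (fst (quotient_of r))"
proof -
  obtain a b where ab: "quotient_of r = (a, b)" by (cases "quotient_of r") auto
  then have "b > 0" by (rule quotient_of_denom_pos)
  with ab quotient_of_div[OF ab] show ?thesis by simp
qed

lemma int_mult:
  assumes "finite A" "s \<in> A"
  shows "f s * of_int (\<Prod>s\<in>A. snd (quotient_of (f s))) = of_int \<lfloor>f s * of_int (\<Prod>s\<in>A. snd (quotient_of (f s)))\<rfloor>"
proof -
  have "(\<Prod>s\<in>A. snd (quotient_of (f s))) = snd (quotient_of (f s)) * (\<Prod>s\<in>A-{s}. snd (quotient_of (f s)))"
    using assms by (simp add: prod.remove)
  then have "f s * of_int (\<Prod>s\<in>A. snd (quotient_of (f s))) = of_int (fst (quotient_of (f s)) * (\<Prod>s\<in>A-{s}. snd (quotient_of (f s))))"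
    using den_mult[of "f s"] by (simp add: mult.assoc[symmetric])
  then show ?thesis by (simp only: floor_of_int)
qed

lemma prod_pos_den: "(\<Prod>s\<in>A. snd (quotient_of (f s))) > 0"
  by (intro prod_pos) (simp add: quotient_of_denom_pos')

lemma sum_shift: "(\<Sum>t<a+(b::nat). g t) = (\<Sum>t<a. g t) + (\<Sum>i<b. g (a+i))"
  by (induction b) (auto simp: add.assoc)

lemma sum_blocks: "(\<Sum>t<(r+1)*(d::nat). g t) = (\<Sum>jj<d. \<Sum>i<r+1. g (jj*(r+1)+i))"
proof (induction d)
  case (Suc d)
  have "(r+1) * Suc d = (r+1)*d + (r+1)" by simp
  then show ?case using Suc by (simp only: sum_shift) (simp add: add.commute mult.commute)
qed simp

lemma reindex:
  fixes a :: "nat \<Rightarrow> rat" and b :: "nat \<Rightarrow> rat poly"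
  shows "(\<Sum>i\<le>r. \<Sum>j\<le>d. of_int (wv ! ((d - j) * (r + 1) + i)) * poly (b j) (of_nat nn) * a (nn + i))
       = mat_vec (recM a b r d) ((r+1)*(d+1)) wv nn"
proof -
  let ?g = "\<lambda>t. recM a b r d nn t * of_int (wv ! t)"
  have "mat_vec (recM a b r d) ((r+1)*(d+1)) wv nn = (\<Sum>jj<d+1. \<Sum>i<r+1. ?g (jj*(r+1)+i))"
    unfolding mat_vec_def by (rule sum_blocks)
  also have "\<dots> = (\<Sum>j<d+1. \<Sum>i<r+1. ?g ((d - j)*(r+1)+i))"
    by (subst sum.nat_diff_reindex[symmetric]) simp
  also have "\<dots> = (\<Sum>i<r+1. \<Sum>j<d+1. ?g ((d - j)*(r+1)+i))" by (rule sum.swap)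
  also have "\<dots> = (\<Sum>i\<le>r. \<Sum>j\<le>d. of_int (wv ! ((d - j) * (r + 1) + i)) * poly (b j) (of_nat nn) * a (nn + i))"
  proof -
    have pt: "?g ((d - j)*(r+1)+i) = of_int (wv ! ((d - j) * (r + 1) + i)) * poly (b j) (of_nat nn) * a (nn + i)"
      if ij: "i < r+1" "j < d+1" for i j
    proof -
      have md: "\<And>x i k. (i::nat) < k \<Longrightarrow> (x*k + i) mod k = i \<and> (x*k+i) div k = x" by simp
      from ij md[of i "r+1" "d-j"] have "((d - j) * (r + 1) + i) mod (r+1) = i" "((d - j) * (r + 1) + i) div (r+1) = d - j"
        by auto
      with ij show ?thesis by (simp add: recM_def)
    qed
    have e: "{..r} = {..<r+1}" "{..d} = {..<d+1}" by auto
    show ?thesis unfolding e using pt by (intro sum.cong refl) auto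
  qed
  finally show ?thesis ..
qed

lemma sqnorm_bound:
  assumes "t < length v" shows "\<bar>v ! t\<bar> \<le> sqnorm v"
proof -
  have "\<bar>v ! t\<bar> \<le> (v ! t)^2"
  proof (cases "v ! t = 0")
    case False
    then have "1 \<le> \<bar>v ! t\<bar>" by linarith
    then have "\<bar>v ! t\<bar> * 1 \<le> \<bar>v ! t\<bar> * \<bar>v ! t\<bar>" by (intro mult_left_mono) auto
    then show ?thesis by (simp add: power2_eq_square abs_mult[symmetric])
  qed simp
  also have "(v ! t)^2 \<le> (\<Sum>i\<in>{0..<length v}. (v!i)^2)"
    by (rule member_le_sum) (use assms in auto)
  also have "\<dots> = sqnorm v" unfolding sqnorm_def sum_list_sum_nth by simp
  finally show ?thesis .
qed


lemma stepA:
  fixes M :: "nat \<Rightarrow> nat \<Rightarrow> rat" and p :: int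
  assumes pp: "prime p" and den: "\<forall>i t. i<n \<longrightarrow> t<m \<longrightarrow> \<not> p dvd snd (quotient_of (M i t))"
    and knt: "kernel_mod_nontrivial M n m p"
    and I: "I \<subseteq> {..<n}" "rows_indep_mod p M m I"
  shows "card I < m"
proof (rule ccontr)
  assume "\<not> card I < m"
  then have cI: "m \<le> card I" by simp
  from knt obtain wv t0 where wv: "cong_ker M n m p wv" "t0 < m" "\<not> p dvd wv ! t0"
    unfolding kernel_mod_nontrivial_def by blast
  define D where "D i = (\<Prod>t\<in>{..<m}. snd (quotient_of (M i t)))" for i
  define X where "X i t = \<lfloor>M i t * of_int (D i)\<rfloor>" for i t
  have XM: "of_int (X i t) = M i t * of_int (D i)" if "t < m" for i t
    using int_mult[of "{..<m}" t "M i"] that unfolding X_def D_def by simp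
  have Dp: "\<not> p dvd D i" if "i < n" for i
    using den that pp unfolding D_def by (simp add: prime_dvd_prod_iff)
  have finI: "finite I" using I(1) finite_subset by blast
  have orth: "p dvd (\<Sum>t<m. X i t * wv!t)" if "i \<in> I" for i
  proof -
    have "i < n" using that I(1) by auto
    then have rc: "rat_cong0 p (mat_vec M m wv i)" using wv(1) unfolding cong_ker_def by auto
    have "mat_vec M m wv i * of_int (D i) = of_int (\<Sum>t<m. X i t * wv!t)"
      unfolding mat_vec_def sum_distrib_right of_int_sum of_int_mult
      by (intro sum.cong refl) (simp add: XM)
    from rc_dvd[OF rc this] show ?thesis .
  qed
  define T where "T = {..<m} - {t0}"
  have cT: "card T < card I" using cI wv(2) unfolding T_def by auto
  have p1: "\<not> p dvd 1" using pp not_prime_unit by blast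
  have pm: "\<And>a b. \<not> p dvd a \<Longrightarrow> \<not> p dvd b \<Longrightarrow> \<not> p dvd (a*b)"
    using pp by (simp add: prime_dvd_mult_iff)
  from dep[OF p1 pm, of T I X] cT finI obtain c where
    c: "\<exists>i\<in>I. \<not> p dvd c i" "\<forall>t\<in>T. p dvd (\<Sum>i\<in>I. c i * X i t)"
    unfolding T_def by auto
  have s1: "(\<Sum>t<m. X i t * wv!t) = X i t0 * wv!t0 + (\<Sum>t\<in>T. X i t * wv!t)" for i
    unfolding T_def using wv(2) by (simp add: sum.remove)
  have s2: "(\<Sum>t\<in>T. wv!t * (\<Sum>i\<in>I. c i * X i t)) = (\<Sum>i\<in>I. c i * (\<Sum>t\<in>T. X i t * wv!t))"
    unfolding sum_distrib_left by (subst sum.swap) (simp add: mult_ac)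
  have key: "wv!t0 * (\<Sum>i\<in>I. c i * X i t0) =
     (\<Sum>i\<in>I. c i * (\<Sum>t<m. X i t * wv!t)) - (\<Sum>t\<in>T. wv!t * (\<Sum>i\<in>I. c i * X i t))"
    unfolding s2 s1 by (simp add: sum_distrib_left distrib_left sum.distrib mult_ac)
  have "p dvd (\<Sum>i\<in>I. c i * (\<Sum>t<m. X i t * wv!t)) - (\<Sum>t\<in>T. wv!t * (\<Sum>i\<in>I. c i * X i t))"
    using orth c(2) by (intro dvd_diff dvd_sum) (simp_all add: dvd_mult)
  then have "p dvd wv!t0 * (\<Sum>i\<in>I. c i * X i t0)" by (simp only: key)
  then have "p dvd (\<Sum>i\<in>I. c i * X i t0)" using wv(3) pp prime_dvd_multD by blast
  then have allt: "p dvd (\<Sum>i\<in>I. c i * X i t)" if "t < m" for t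
    using c(2) that unfolding T_def by (cases "t = t0") auto
  have rcs: "rat_cong0 p (\<Sum>i\<in>I. of_int (c i * D i) * M i t)" if "t < m" for t
  proof -
    have "(\<Sum>i\<in>I. of_int (c i * D i) * M i t) = of_int (\<Sum>i\<in>I. c i * X i t)"
      unfolding of_int_sum of_int_mult using that by (intro sum.cong refl) (simp add: XM)
    then show ?thesis using rc_of_int[OF allt[OF that]] by simp
  qed
  have ri: "(\<forall>t<m. rat_cong0 p (\<Sum>i\<in>I. of_int (c i * D i) * M i t)) \<longrightarrow> (\<forall>i\<in>I. p dvd c i * D i)"
    using I(2) unfolding rows_indep_mod_def by (rule spec)
  have "\<forall>i\<in>I. p dvd c i * D i" using ri rcs by blast
  moreover from c(1) obtain i where "i \<in> I" "\<not> p dvd c i" by blast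
  ultimately have "p dvd c i * D i" "i < n" using I(1) by auto
  then show False using Dp[of i] \<open>\<not> p dvd c i\<close> pp prime_dvd_multD by blast
qed


lemma rankQ_props:
  fixes M :: "nat \<Rightarrow> nat \<Rightarrow> rat"
  shows "\<exists>I. I \<subseteq> {..<n} \<and> rows_indep_Q M m I \<and> card I = rank_Q M n m"
    and "J \<subseteq> {..<n} \<Longrightarrow> rows_indep_Q M m J \<Longrightarrow> card J \<le> rank_Q M n m"
proof -
  let ?F = "{card I | I. I \<subseteq> {..<n} \<and> rows_indep_Q M m I}"
  have fin: "finite ?F"
    by (rule finite_subset[of _ "{..n}"]) (auto dest: card_mono[rotated, of _ "{..<n}"])
  have "card {} \<in> ?F" by (rule CollectI, rule exI[of _ "{}"]) (simp add: rows_indep_Q_def)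
  then have ne: "?F \<noteq> {}" by blast
  from Max_in[OF fin ne] show "\<exists>I. I \<subseteq> {..<n} \<and> rows_indep_Q M m I \<and> card I = rank_Q M n m"
    unfolding rank_Q_def by auto
  assume "J \<subseteq> {..<n}" "rows_indep_Q M m J"
  then have "card J \<in> ?F" by blast
  from Max_ge[OF fin this] show "card J \<le> rank_Q M n m" unfolding rank_Q_def .
qed

lemma rank_mod_lt:
  fixes M :: "nat \<Rightarrow> nat \<Rightarrow> rat"
  assumes "\<And>I. I \<subseteq> {..<n} \<Longrightarrow> rows_indep_mod p M m I \<Longrightarrow> card I < m"
  shows "rank_mod p M n m < m"
proof -
  let ?F = "{card I | I. I \<subseteq> {..<n} \<and> rows_indep_mod p M m I}"
  have fin: "finite ?F"
    by (rule finite_subset[of _ "{..n}"]) (auto dest: card_mono[rotated, of _ "{..<n}"])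
  have "card {} \<in> ?F" by (rule CollectI, rule exI[of _ "{}"]) (simp add: rows_indep_mod_def)
  then have ne: "?F \<noteq> {}" by blast
  from Max_in[OF fin ne] assms show ?thesis unfolding rank_mod_def by auto
qed

lemma stepB:
  fixes M :: "nat \<Rightarrow> nat \<Rightarrow> rat"
  assumes R: "rank_Q M n m < m"
  shows "\<exists>v. in_ker M n m v \<and> v \<noteq> replicate m 0"
proof -
  obtain I where I: "I \<subseteq> {..<n}" "rows_indep_Q M m I" "card I = rank_Q M n m"
    using rankQ_props(1) by blast
  have finI: "finite I" using I(1) finite_subset by blast
  have p1: "\<not> (0::rat) dvd 1" by simp
  have pm: "\<And>a b. \<not> (0::rat) dvd a \<Longrightarrow> \<not> 0 dvd b \<Longrightarrow> \<not> 0 dvd (a*b)" by simp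
  from dep[OF p1 pm, of I "{..<m}" "\<lambda>t i. M i t"] finI R I(3) obtain x where
    x: "\<exists>t\<in>{..<m}. x t \<noteq> 0" "\<forall>i\<in>I. (\<Sum>t<m. x t * M i t) = 0" by auto
  have all: "(\<Sum>t<m. x t * M i t) = 0" if "i < n" for i
  proof (cases "i \<in> I")
    case False
    have "card (insert i I) > rank_Q M n m" using False finI I(3) by simp
    then have "\<not> rows_indep_Q M m (insert i I)" using rankQ_props(2)[of "insert i I" n M m] I(1) that by auto
    then obtain g where g: "\<forall>t<m. (\<Sum>l\<in>insert i I. g l * M l t) = 0" "\<exists>l\<in>insert i I. g l \<noteq> 0"
      unfolding rows_indep_Q_def by blast
    have gs: "g i * M i t = - (\<Sum>l\<in>I. g l * M l t)" if "t < m" for t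
      using g(1) that False finI by (simp add: eq_neg_iff_add_eq_0)
    have "g i \<noteq> 0"
    proof
      assume "g i = 0"
      then have "\<forall>t<m. (\<Sum>l\<in>I. g l * M l t) = 0" using gs by auto
      then have "\<forall>l\<in>I. g l = 0" using I(2) unfolding rows_indep_Q_def by blast
      then show False using g(2) \<open>g i = 0\<close> by auto
    qed
    have "g i * (\<Sum>t<m. x t * M i t) = (\<Sum>t<m. x t * (g i * M i t))"
      by (simp add: sum_distrib_left mult_ac)
    also have "\<dots> = (\<Sum>t<m. - (\<Sum>l\<in>I. g l * (x t * M l t)))"
      by (intro sum.cong refl) (simp add: gs sum_distrib_left mult_ac)
    also have "\<dots> = - (\<Sum>l\<in>I. g l * (\<Sum>t<m. x t * M l t))"
      by (simp add: sum_negf sum_distrib_left) (rule sum.swap)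
    also have "\<dots> = 0" using x(2) by simp
    finally show ?thesis using \<open>g i \<noteq> 0\<close> by simp
  qed (use x(2) in auto)
  define L where "L = (\<Prod>t\<in>{..<m}. snd (quotient_of (x t)))"
  define y where "y t = \<lfloor>x t * of_int L\<rfloor>" for t
  have yx: "of_int (y t) = x t * of_int L" if "t < m" for t
    using int_mult[of "{..<m}" t x] that unfolding y_def L_def by simp
  have Lpos: "L > 0" unfolding L_def by (rule prod_pos_den)
  define v where "v = map y [0..<m]"
  have "in_ker M n m v"
    unfolding in_ker_def
  proof (intro conjI allI impI)
    show "length v = m" by (simp add: v_def)
    fix i assume "i < n"
    have "mat_vec M m v i = (\<Sum>t<m. M i t * (x t * of_int L))"
      unfolding mat_vec_def v_def by (intro sum.cong refl) (simp add: yx)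
    also have "\<dots> = of_int L * (\<Sum>t<m. x t * M i t)" by (simp add: sum_distrib_left mult_ac)
    finally show "mat_vec M m v i = 0" using all[OF \<open>i < n\<close>] by simp
  qed
  moreover have "v \<noteq> replicate m 0"
  proof
    assume "v = replicate m 0"
    from x(1) obtain t where t: "t < m" "x t \<noteq> 0" by auto
    then have "y t = 0" using \<open>v = replicate m 0\<close> unfolding v_def
      by (metis diff_zero length_upt nth_map nth_replicate nth_upt add_0)
    then show False using yx[OF t(1)] t(2) Lpos by simp
  qed
  ultimately show ?thesis by blast
qed

theorem mainTheorem1:
  fixes a :: "nat \<Rightarrow> rat" and b :: "nat \<Rightarrow> rat poly" and N r d :: nat
    and P :: "nat \<Rightarrow> nat"
    and Vs :: "nat \<Rightarrow> int list list"
    and lll :: "int list list \<Rightarrow> int list list"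
  defines "m \<equiv> (r + 1) * (d + 1)"
    and "n \<equiv> N - r + 1"
    and "M \<equiv> recM a b r d"
    and "q \<equiv> \<lambda>k. \<Prod>i\<le>k. int (P i)"
    and "w \<equiv> \<lambda>k. hd (lll (Vs k @ map (unitvec ((r + 1) * (d + 1)) (\<Prod>i\<le>k. int (P i))) [0..<(r + 1) * (d + 1)]))"
  assumes basis: "\<forall>j. b j \<noteq> 0 \<and> degree (b j) = j"
    and rN: "r \<le> N"
    and primes: "\<forall>k. prime (P k)"
    and distinct: "inj P"
    and denoms: "\<forall>k i t. i < n \<longrightarrow> t < m \<longrightarrow> \<not> int (P k) dvd snd (quotient_of (M i t))"
    and ranks: "\<forall>k. rank_mod (int (P k)) M n m = rank_Q M n m"
    and crt: "\<forall>k\<ge>1. (\<forall>v\<in>set (Vs k). length v = m) \<and>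
               lattice_of m (Vs k @ map (unitvec m (q k)) [0..<m]) = {v. cong_ker M n m (q k) v}"
    and lll: "lll_spec m lll"
  shows "kernel_mod_nontrivial M n m (int (P 0)) \<longrightarrow>
           (\<exists>k\<ge>1. in_ker M n m (w k) \<and> w k \<noteq> replicate m 0) \<and>
           (let K = (LEAST k. k \<ge> 1 \<and> in_ker M n m (w k) \<and> w k \<noteq> replicate m 0);
                c = (\<lambda>i j. w K ! ((d - j) * (r + 1) + i))
            in in_ker M n m (w K) \<and> w K \<noteq> replicate m 0 \<and>
               (\<forall>nn\<le>N - r. (\<Sum>i\<le>r. \<Sum>j\<le>d. of_int (c i j) * poly (b j) (of_nat nn) * a (nn + i)) = 0))"
proof (rule impI)
  assume knt: "kernel_mod_nontrivial M n m (int (P 0))"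
  have pp0: "prime (int (P 0))" using primes by simp
  have "rank_mod (int (P 0)) M n m < m"
  proof (rule rank_mod_lt)
    fix I assume "I \<subseteq> {..<n}" "rows_indep_mod (int (P 0)) M m I"
    then show "card I < m" using stepA[OF pp0 _ knt] denoms by blast
  qed
  then have "rank_Q M n m < m" using ranks by simp
  then obtain v0 where v0: "in_ker M n m v0" "v0 \<noteq> replicate m 0" using stepB by blast
  have lv0: "length v0 = m" using v0(1) unfolding in_ker_def by simp
  define S where "S k = Vs k @ map (unitvec m (q k)) [0..<m]" for k
  have wk: "w k = hd (lll (S k))" for k unfolding w_def S_def m_def q_def by simp
  define B where "B = 4^m * sqnorm v0"
  have sq0: "0 \<le> sqnorm v" for v unfolding sqnorm_def by (induction v) auto
  have B0: "0 \<le> B" unfolding B_def using sq0[of v0] by simp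
  have props: "cong_ker M n m (q k) (w k) \<and> w k \<noteq> replicate m 0 \<and> length (w k) = m \<and> sqnorm (w k) \<le> B"
    if k1: "k \<ge> 1" for k
  proof -
    have crtk: "\<forall>v\<in>set (Vs k). length v = m" "lattice_of m (S k) = {v. cong_ker M n m (q k) v}"
      using crt k1 unfolding S_def by auto
    have lenS: "\<forall>s\<in>set (S k). length s = m" using crtk(1) unfolding S_def by (auto simp: unitvec_def)
    from lll lenS have LS: "\<forall>s\<in>set (lll (S k)). length s = m" "lattice_of m (lll (S k)) = lattice_of m (S k)"
      "int_lin_indep m (lll (S k))"
      "lll (S k) \<noteq> [] \<longrightarrow> (\<forall>v\<in>lattice_of m (S k). v \<noteq> replicate m 0 \<longrightarrow> sqnorm (hd (lll (S k))) \<le> 4 ^ m * sqnorm v)"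
      unfolding lll_spec_def by blast+
    have "cong_ker M n m (q k) v0" using v0(1) unfolding cong_ker_def in_ker_def by (auto simp: rc_0)
    then have v0L: "v0 \<in> lattice_of m (S k)" using crtk(2) by simp
    have ne: "lll (S k) \<noteq> []"
    proof
      assume "lll (S k) = []"
      then have "v0 \<in> lattice_of m []" using LS(2) v0L by simp
      then have "v0 = replicate m 0" unfolding lattice_of_def by (auto intro: nth_equalityI)
      then show False using v0(2) by simp
    qed
    have hdin: "hd (lll (S k)) \<in> set (lll (S k))" using ne by simp
    have lw: "length (w k) = m" using LS(1) hdin wk by simp
    define c0 where "c0 = (\<lambda>i::nat. if i = 0 then (1::int) else 0)"
    have sum0: "(\<Sum>i<length (lll (S k)). c0 i * (lll (S k) ! i) ! t) = w k ! t" for t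
    proof -
      have "(\<Sum>i<length (lll (S k)). c0 i * (lll (S k) ! i) ! t) = (\<Sum>i<length (lll (S k)). if i = 0 then (lll (S k) ! i) ! t else 0)"
        by (intro sum.cong refl) (simp add: c0_def)
      also have "\<dots> = (lll (S k) ! 0) ! t" using ne by (simp add: sum.delta)
      finally show ?thesis using ne by (simp add: wk hd_conv_nth)
    qed
    have "w k \<in> lattice_of m (lll (S k))" unfolding lattice_of_def using lw sum0
      by (intro CollectI conjI exI[of _ c0]) auto
    then have cw: "cong_ker M n m (q k) (w k)" using LS(2) crtk(2) by simp
    have nz: "w k \<noteq> replicate m 0"
    proof
      assume z: "w k = replicate m 0"
      have "\<forall>t<m. (\<Sum>i<length (lll (S k)). c0 i * (lll (S k) ! i) ! t) = 0" using sum0 z by simp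
      then have "c0 0 = 0" using LS(3) ne unfolding int_lin_indep_def by blast
      then show False by (simp add: c0_def)
    qed
    have "sqnorm (w k) \<le> B" using LS(4) ne v0L v0(2) unfolding B_def wk by blast
    then show ?thesis using cw nz lw by blast
  qed
  define D where "D = (\<Prod>s\<in>{..<n}\<times>{..<m}. snd (quotient_of (M (fst s) (snd s))))"
  have MD: "M i t * of_int D = of_int \<lfloor>M i t * of_int D\<rfloor>" if "i < n" "t < m" for i t
    using int_mult[of "{..<n}\<times>{..<m}" "(i,t)" "\<lambda>s. M (fst s) (snd s)"] that unfolding D_def by simp
  have Dpos: "D > 0" unfolding D_def by (rule prod_pos_den)
  define C where "C = (\<Sum>i<n. \<Sum>t<m. \<bar>M i t\<bar> * of_int B)"
  have qpos: "q k > 0" for k unfolding q_def using primes by (intro prod_pos) (simp add: prime_gt_0_nat)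
  have big: "in_ker M n m (w k)" if k1: "k \<ge> 1" and qk: "of_int (q k) > C * of_int D" for k
    unfolding in_ker_def
  proof (intro conjI allI impI)
    note pk = props[OF k1]
    show "length (w k) = m" using pk by simp
    fix i assume i: "i < n"
    define x where "x = mat_vec M m (w k) i"
    define z where "z = (\<Sum>t<m. \<lfloor>M i t * of_int D\<rfloor> * (w k ! t))"
    have xz: "x * of_int D = of_int z"
      unfolding x_def z_def mat_vec_def sum_distrib_right of_int_sum of_int_mult
    proof (intro sum.cong refl)
      fix t assume "t \<in> {..<m}"
      then have e: "(of_int \<lfloor>M i t * of_int D\<rfloor> :: rat) = M i t * of_int D" using MD[OF i] by simp
      show "M i t * of_int (w k ! t) * of_int D = of_int \<lfloor>M i t * of_int D\<rfloor> * of_int (w k ! t)"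
        by (simp only: e) (simp add: mult_ac)
    qed
    have "rat_cong0 (q k) x" using pk i unfolding cong_ker_def x_def by auto
    from rc_dvd[OF this xz] have qz: "q k dvd z" .
    have "\<bar>x\<bar> \<le> (\<Sum>t<m. \<bar>M i t\<bar> * of_int B)"
    proof -
      have "\<bar>x\<bar> \<le> (\<Sum>t<m. \<bar>M i t * of_int (w k ! t)\<bar>)" unfolding x_def mat_vec_def by (rule sum_abs)
      also have "\<dots> \<le> (\<Sum>t<m. \<bar>M i t\<bar> * of_int B)"
      proof (intro sum_mono)
        fix t assume "t \<in> {..<m}"
        then have "\<bar>w k ! t\<bar> \<le> B" using sqnorm_bound[of t "w k"] pk by auto
        then have "\<bar>(of_int (w k ! t) :: rat)\<bar> \<le> of_int B" by linarith
        then show "\<bar>M i t * of_int (w k ! t)\<bar> \<le> \<bar>M i t\<bar> * of_int B"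
          unfolding abs_mult by (intro mult_left_mono) auto
      qed
      finally show ?thesis .
    qed
    also have "\<dots> \<le> C" unfolding C_def
      using i by (intro member_le_sum[of i "{..<n}" "\<lambda>i. \<Sum>t<m. \<bar>M i t\<bar> * of_int B"]) (auto intro!: sum_nonneg mult_nonneg_nonneg simp: B0)
    finally have xC: "\<bar>x\<bar> \<le> C" .
    have "z = 0"
    proof (rule ccontr)
      assume "z \<noteq> 0"
      then have "\<bar>q k\<bar> \<le> \<bar>z\<bar>" using qz by (rule dvd_imp_le_int)
      then have "of_int (q k) \<le> \<bar>x * of_int D\<bar>" using qpos[of k] xz by simp
      also have "\<dots> = \<bar>x\<bar> * of_int D" using Dpos by (simp add: abs_mult)
      also have "\<dots> \<le> C * of_int D" using xC Dpos by (intro mult_right_mono) auto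
      finally show False using qk by simp
    qed
    then show "mat_vec M m (w k) i = 0" using xz Dpos unfolding x_def by simp
  qed
  have q2: "of_int (q k) \<ge> (2::rat)^(k+1)" for k
  proof -
    have "(\<Prod>i\<le>k. (2::int)) \<le> q k" unfolding q_def
      using primes by (intro prod_mono) (auto simp: prime_ge_2_nat)
    then have "(2::int)^(k+1) \<le> q k" by simp
    then show ?thesis by (metis of_int_le_iff of_int_numeral of_int_power)
  qed
  define k0 where "k0 = nat \<lceil>C * of_int D\<rceil> + 1"
  have "C * of_int D < of_int k0" unfolding k0_def by linarith
  also have "\<dots> < (2::rat)^(k0+1)"
  proof -
    have "k0 < 2^(k0+1)" using less_exp[of "k0+1"] by linarith
    then have "(of_nat k0 :: rat) < of_nat (2^(k0+1))" by (simp only: of_nat_less_iff)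
    then show ?thesis by simp
  qed
  also have "\<dots> \<le> of_int (q k0)" by (rule q2)
  finally have "in_ker M n m (w k0)" using big[of k0] unfolding k0_def by simp
  moreover have "w k0 \<noteq> replicate m 0" "k0 \<ge> 1" using props[of k0] unfolding k0_def by auto
  ultimately have ex: "\<exists>k\<ge>1. in_ker M n m (w k) \<and> w k \<noteq> replicate m 0" by blast
  define K where "K = (LEAST k. k \<ge> 1 \<and> in_ker M n m (w k) \<and> w k \<noteq> replicate m 0)"
  have K: "K \<ge> 1 \<and> in_ker M n m (w K) \<and> w K \<noteq> replicate m 0"
    unfolding K_def using ex by (rule LeastI_ex) 
  show "(\<exists>k\<ge>1. in_ker M n m (w k) \<and> w k \<noteq> replicate m 0) \<and>
           (let K = (LEAST k. k \<ge> 1 \<and> in_ker M n m (w k) \<and> w k \<noteq> replicate m 0);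
                c = (\<lambda>i j. w K ! ((d - j) * (r + 1) + i))
            in in_ker M n m (w K) \<and> w K \<noteq> replicate m 0 \<and>
               (\<forall>nn\<le>N - r. (\<Sum>i\<le>r. \<Sum>j\<le>d. of_int (c i j) * poly (b j) (of_nat nn) * a (nn + i)) = 0))"
    unfolding Let_def K_def[symmetric]
  proof (intro conjI allI impI ex)
    show "in_ker M n m (w K)" "w K \<noteq> replicate m 0" using K by auto
    fix nn assume "nn \<le> N - r"
    then have "nn < n" unfolding n_def by simp
    then have "mat_vec M m (w K) nn = 0" using K unfolding in_ker_def by blast
    then show "(\<Sum>i\<le>r. \<Sum>j\<le>d. of_int (w K ! ((d - j) * (r + 1) + i)) * poly (b j) (of_nat nn) * a (nn + i)) = 0"
      unfolding reindex M_def m_def .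
  qed
qed

end
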